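(* Let "free" mean any one of the following three notions: detection-incoherent, creation-incoherent, or detection-creation-incoherent. If $\Phi$ and $\Theta$ are free quantum operations, then $\Phi\circ\Theta$ (whenever the output of $\Theta$ matches the input of $\Phi$) and $\Phi\otimes\Theta$ are free as well.
   Context: Every finite-dimensional system carries a fixed orthonormal incoherent basis $\{|i\rangle\}$; composite systems use the product basis. The total dephasing map is $\Delta(\rho)=\sum_i|i\rangle\langle i|\rho|i\rangle\langle i|$, and on composite systems it is the tensor product of the dephasing maps of the subsystems. A quantum operation is a completely positive trace-preserving linear map. A quantum operation $\Phi$ is detection-incoherent iff $\Delta\Phi=\Delta\Phi\Delta$, creation-incoherent iff $\Phi\Delta=\Delta\Phi\Delta$, and detection-creation-incoherent iff $\Delta\Phi=\Phi\Delta$. *)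

theory Defs
  imports "Jordan_Normal_Form.Matrix" Complex_Main
begin

text \<open>Finite-dimensional systems of dimension n: operators are n x n complex matrices,
  the incoherent basis is the standard basis. A composite system of dimensions n1, n2 has
  dimension n1*n2 with product basis index (i,k) |-> i*n2 + k (Kronecker ordering).\<close>

definition mtrace :: "complex mat \<Rightarrow> complex" where
  "mtrace A = (\<Sum>i<dim_row A. A $$ (i,i))"

definition psd :: "nat \<Rightarrow> complex mat \<Rightarrow> bool" where
  "psd n A \<longleftrightarrow> A \<in> carrier_mat n n \<and>
     (\<forall>v \<in> carrier_vec n. scalar_prod (conjugate v) (mult_mat_vec A v) \<in> \<real> \<and> 0 \<le> Re (scalar_prod (conjugate v) (mult_mat_vec A v)))"

definition dephase :: "nat \<Rightarrow> complex mat \<Rightarrow> complex mat" where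
  "dephase n A = mat n n (\<lambda>(i,j). if i = j then A $$ (i,j) else 0)"

definition munit :: "nat \<Rightarrow> nat \<Rightarrow> nat \<Rightarrow> complex mat" where
  "munit n i j = mat n n (\<lambda>(a,b). if a = i \<and> b = j then 1 else 0)"

definition kron :: "complex mat \<Rightarrow> complex mat \<Rightarrow> complex mat" where
  "kron A B = mat (dim_row A * dim_row B) (dim_col A * dim_col B)
     (\<lambda>(i,j). A $$ (i div dim_row B, j div dim_col B) * B $$ (i mod dim_row B, j mod dim_col B))"

text \<open>Tensor product of linear maps Phi : M_n1 -> M_m1 and Theta : M_n2 -> M_m2,
  as the linear map M_(n1*n2) -> M_(m1*m2) determined by
  (Phi (x) Theta)(|i><j| (x) |k><l|) = Phi(|i><j|) (x) Theta(|k><l|).\<close>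
definition map_tensor ::
  "nat \<Rightarrow> nat \<Rightarrow> nat \<Rightarrow> nat \<Rightarrow> (complex mat \<Rightarrow> complex mat) \<Rightarrow> (complex mat \<Rightarrow> complex mat)
     \<Rightarrow> complex mat \<Rightarrow> complex mat" where
  "map_tensor n1 n2 m1 m2 \<Phi> \<Theta> X = mat (m1 * m2) (m1 * m2) (\<lambda>(p,q).
     \<Sum>i<n1. \<Sum>j<n1. \<Sum>k<n2. \<Sum>l<n2.
       X $$ (i * n2 + k, j * n2 + l) * kron (\<Phi> (munit n1 i j)) (\<Theta> (munit n2 k l)) $$ (p,q))"

definition lin_map :: "nat \<Rightarrow> nat \<Rightarrow> (complex mat \<Rightarrow> complex mat) \<Rightarrow> bool" where
  "lin_map n m \<Phi> \<longleftrightarrow>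
     (\<forall>A \<in> carrier_mat n n. \<Phi> A \<in> carrier_mat m m) \<and>
     (\<forall>A \<in> carrier_mat n n. \<forall>B \<in> carrier_mat n n. \<Phi> (A + B) = \<Phi> A + \<Phi> B) \<and>
     (\<forall>A \<in> carrier_mat n n. \<forall>c. \<Phi> (c \<cdot>\<^sub>m A) = c \<cdot>\<^sub>m \<Phi> A)"

definition completely_positive :: "nat \<Rightarrow> nat \<Rightarrow> (complex mat \<Rightarrow> complex mat) \<Rightarrow> bool" where
  "completely_positive n m \<Phi> \<longleftrightarrow>
     (\<forall>k A. psd (k * n) A \<longrightarrow> psd (k * m) (map_tensor k n k m (\<lambda>X. X) \<Phi> A))"

definition trace_preserving :: "nat \<Rightarrow> (complex mat \<Rightarrow> complex mat) \<Rightarrow> bool" where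
  "trace_preserving n \<Phi> \<longleftrightarrow> (\<forall>A \<in> carrier_mat n n. mtrace (\<Phi> A) = mtrace A)"

definition quantum_operation :: "nat \<Rightarrow> nat \<Rightarrow> (complex mat \<Rightarrow> complex mat) \<Rightarrow> bool" where
  "quantum_operation n m \<Phi> \<longleftrightarrow>
     lin_map n m \<Phi> \<and> completely_positive n m \<Phi> \<and> trace_preserving n \<Phi>"

definition detection_incoherent :: "nat \<Rightarrow> nat \<Rightarrow> (complex mat \<Rightarrow> complex mat) \<Rightarrow> bool" where
  "detection_incoherent n m \<Phi> \<longleftrightarrow> quantum_operation n m \<Phi> \<and>
     (\<forall>A \<in> carrier_mat n n. dephase m (\<Phi> A) = dephase m (\<Phi> (dephase n A)))"

definition creation_incoherent :: "nat \<Rightarrow> nat \<Rightarrow> (complex mat \<Rightarrow> complex mat) \<Rightarrow> bool" where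
  "creation_incoherent n m \<Phi> \<longleftrightarrow> quantum_operation n m \<Phi> \<and>
     (\<forall>A \<in> carrier_mat n n. \<Phi> (dephase n A) = dephase m (\<Phi> (dephase n A)))"

definition detection_creation_incoherent :: "nat \<Rightarrow> nat \<Rightarrow> (complex mat \<Rightarrow> complex mat) \<Rightarrow> bool" where
  "detection_creation_incoherent n m \<Phi> \<longleftrightarrow> quantum_operation n m \<Phi> \<and>
     (\<forall>A \<in> carrier_mat n n. dephase m (\<Phi> A) = \<Phi> (dephase n A))"

datatype free_kind = DI | CI | DCI

fun free_op :: "free_kind \<Rightarrow> nat \<Rightarrow> nat \<Rightarrow> (complex mat \<Rightarrow> complex mat) \<Rightarrow> bool" where
  "free_op DI = detection_incoherent"
| "free_op CI = creation_incoherent"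
| "free_op DCI = detection_creation_incoherent"

end

theory Submission
  imports Defs
begin

lemma lin_carrier: "lin_map n m \<Phi> \<Longrightarrow> A \<in> carrier_mat n n \<Longrightarrow> \<Phi> A \<in> carrier_mat m m"
  by (simp add: lin_map_def)

lemma munit_carrier[simp]: "munit n i j \<in> carrier_mat n n" by (simp add: munit_def)
lemma munit_index[simp]: "a < n \<Longrightarrow> b < n \<Longrightarrow> munit n i j $$ (a,b) = (if a = i \<and> b = j then 1 else 0)"
  by (simp add: munit_def)

definition part :: "nat \<Rightarrow> (nat\<times>nat) set \<Rightarrow> complex mat \<Rightarrow> complex mat" where
  "part n S X = mat n n (\<lambda>(a,b). if (a,b) \<in> S then X $$ (a,b) else 0)"

lemma lin_zero: assumes "lin_map n m \<Phi>" shows "\<Phi> (0\<^sub>m n n) = 0\<^sub>m m m"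
proof -
  have "0\<^sub>m n n = (0::complex) \<cdot>\<^sub>m 0\<^sub>m n n" by (intro eq_matI) auto
  moreover have "\<Phi> (0 \<cdot>\<^sub>m 0\<^sub>m n n) = 0 \<cdot>\<^sub>m \<Phi> (0\<^sub>m n n)" using assms zero_carrier_mat unfolding lin_map_def by blast
  ultimately have "\<Phi> (0\<^sub>m n n) = 0 \<cdot>\<^sub>m \<Phi> (0\<^sub>m n n)" by simp
  also have "\<dots> = 0\<^sub>m m m" using lin_carrier[OF assms, of "0\<^sub>m n n"] by (intro eq_matI) auto
  finally show ?thesis .
qed

lemma lin_part:
  assumes lin: "lin_map n m \<Phi>" and fin: "finite S" and sub: "S \<subseteq> {..<n} \<times> {..<n}"
    and p: "p < m" and q: "q < m"
  shows "\<Phi> (part n S X) $$ (p,q) = (\<Sum>(a,b)\<in>S. X $$ (a,b) * \<Phi> (munit n a b) $$ (p,q))"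
  using fin sub
proof (induction S rule: finite_induct)
  case empty
  have "part n {} X = 0\<^sub>m n n" by (intro eq_matI) (auto simp: part_def)
  then show ?case using lin_zero[OF lin] p q by simp
next
  case (insert ab S)
  obtain a b where ab: "ab = (a,b)" by (cases ab)
  have a: "a < n" "b < n" using insert ab by auto
  have eq: "part n (insert ab S) X = part n S X + X $$ (a,b) \<cdot>\<^sub>m munit n a b"
    using insert(2) ab a by (intro eq_matI) (auto simp: part_def munit_def)
  have c1: "part n S X \<in> carrier_mat n n" by (simp add: part_def)
  have "\<Phi> (part n (insert ab S) X) = \<Phi> (part n S X) + X $$ (a,b) \<cdot>\<^sub>m \<Phi> (munit n a b)"
    using lin c1 by (simp add: eq lin_map_def)
  then have "\<Phi> (part n (insert ab S) X) $$ (p,q) = \<Phi> (part n S X) $$ (p,q) + X $$ (a,b) * \<Phi> (munit n a b) $$ (p,q)"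
    using carrier_matD[OF lin_carrier[OF lin c1]] carrier_matD[OF lin_carrier[OF lin munit_carrier]] p q by simp
  then show ?case using insert ab by simp
qed

lemma lin_expand:
  assumes lin: "lin_map n m \<Phi>" and X: "X \<in> carrier_mat n n" and p: "p < m" and q: "q < m"
  shows "\<Phi> X $$ (p,q) = (\<Sum>a<n. \<Sum>b<n. X $$ (a,b) * \<Phi> (munit n a b) $$ (p,q))"
proof -
  have "part n ({..<n} \<times> {..<n}) X = X" using X by (intro eq_matI) (auto simp: part_def)
  then have "\<Phi> X $$ (p,q) = (\<Sum>(a,b)\<in>{..<n} \<times> {..<n}. X $$ (a,b) * \<Phi> (munit n a b) $$ (p,q))"
    using lin_part[OF lin _ _ p q, of "{..<n} \<times> {..<n}" X] by simp
  then show ?thesis by (simp add: sum.cartesian_product)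
qed

lemma idx_less: "p1 < (m1::nat) \<Longrightarrow> p2 < m2 \<Longrightarrow> p1*m2+p2 < m1*m2"
proof -
  assume a: "p1 < m1" "p2 < m2"
  have "p1*m2+p2 < p1*m2 + m2" using a by simp
  also have "\<dots> = Suc p1 * m2" by simp
  also have "\<dots> \<le> m1 * m2" using a by (intro mult_le_mono1) simp
  finally show ?thesis .
qed

lemma kron_index:
  assumes "A \<in> carrier_mat m1 m1" "B \<in> carrier_mat m2 m2" "p1 < m1" "q1 < m1" "p2 < m2" "q2 < m2"
  shows "kron A B $$ (p1*m2+p2, q1*m2+q2) = A $$ (p1,q1) * B $$ (p2,q2)"
  using assms idx_less[of p1 m1 p2 m2] idx_less[of q1 m1 q2 m2] by (simp add: kron_def)

lemma map_tensor_index: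
  assumes l1: "lin_map n1 m1 \<Phi>" and l2: "lin_map n2 m2 \<Theta>" and "p1 < m1" "q1 < m1" "p2 < m2" "q2 < m2"
  shows "map_tensor n1 n2 m1 m2 \<Phi> \<Theta> X $$ (p1*m2+p2, q1*m2+q2) =
    (\<Sum>i<n1. \<Sum>j<n1. \<Sum>k<n2. \<Sum>l<n2. X $$ (i*n2+k, j*n2+l) * (\<Phi> (munit n1 i j) $$ (p1,q1) * \<Theta> (munit n2 k l) $$ (p2,q2)))"
proof -
  have "\<And>i j k l. kron (\<Phi> (munit n1 i j)) (\<Theta> (munit n2 k l)) $$ (p1*m2+p2, q1*m2+q2) = \<Phi> (munit n1 i j) $$ (p1,q1) * \<Theta> (munit n2 k l) $$ (p2,q2)"
    by (rule kron_index[OF lin_carrier[OF l1 munit_carrier] lin_carrier[OF l2 munit_carrier] assms(3-6)])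
  then show ?thesis
    using assms idx_less[of p1 m1 p2 m2] idx_less[of q1 m1 q2 m2]
    unfolding map_tensor_def by simp
qed

definition blk :: "nat \<Rightarrow> complex mat \<Rightarrow> nat \<Rightarrow> nat \<Rightarrow> complex mat" where
  "blk n X i j = mat n n (\<lambda>(a,b). X $$ (i*n+a, j*n+b))"

lemma blk_carrier[simp]: "blk n X i j \<in> carrier_mat n n" by (simp add: blk_def)
lemma blk_index[simp]: "a < n \<Longrightarrow> b < n \<Longrightarrow> blk n X i j $$ (a,b) = X $$ (i*n+a, j*n+b)"
  by (simp add: blk_def)

lemma lin_id: "lin_map k k (\<lambda>X. X)" by (simp add: lin_map_def)

lemma idtensor_index:
  assumes l: "lin_map n m \<Phi>" and "i<k" "j<k" "p<m" "q<m"
  shows "map_tensor k n k m (\<lambda>X. X) \<Phi> X $$ (i*m+p, j*m+q) = \<Phi> (blk n X i j) $$ (p,q)"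
proof -
  have "map_tensor k n k m (\<lambda>X. X) \<Phi> X $$ (i*m+p, j*m+q) = (\<Sum>i'<k. \<Sum>j'<k. \<Sum>a<n. \<Sum>b<n. X $$ (i'*n+a, j'*n+b) * (munit k i' j' $$ (i,j) * \<Phi> (munit n a b) $$ (p,q)))"
    by (rule map_tensor_index[OF lin_id l assms(2-5)])
  also have "\<dots> = (\<Sum>i'<k. \<Sum>j'<k. if i' = i \<and> j' = j then (\<Sum>a<n. \<Sum>b<n. X $$ (i*n+a, j*n+b) * \<Phi> (munit n a b) $$ (p,q)) else 0)"
    using assms by (intro sum.cong refl) auto
  also have "\<dots> = (\<Sum>a<n. \<Sum>b<n. X $$ (i*n+a, j*n+b) * \<Phi> (munit n a b) $$ (p,q))"
  proof -
    have "\<And>i' c. (\<Sum>j'<k. if i' = i \<and> j' = j then c else (0::complex)) = (if i' = i then c else 0)"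
      using assms by (auto simp: sum.delta)
    then show ?thesis using assms by (simp add: sum.delta)
  qed
  also have "\<dots> = \<Phi> (blk n X i j) $$ (p,q)"
    using lin_expand[OF l blk_carrier assms(4,5)] by simp
  finally show ?thesis .
qed

lemma sum_fiber:
  fixes N' :: nat
  assumes "\<forall>x<N'. \<sigma> x < (N::nat)"
  shows "(\<Sum>u<N. (\<Sum>x\<in>{x. x<N' \<and> \<sigma> x = u}. f x) * h u) = (\<Sum>x<N'. f x * (h (\<sigma> x)::complex))"
proof -
  have "(\<Sum>u<N. (\<Sum>x\<in>{x. x<N' \<and> \<sigma> x = u}. f x) * h u) = (\<Sum>u<N. \<Sum>x\<in>{x \<in> {..<N'}. \<sigma> x = u}. f x * h (\<sigma> x))"
    unfolding sum_distrib_right by (intro sum.cong) auto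
  also have "\<dots> = (\<Sum>x<N'. f x * h (\<sigma> x))"
    using assms by (intro sum.group) auto
  finally show ?thesis .
qed

lemma psd_reindex:
  assumes A: "psd N A" and \<sigma>: "\<forall>x<N'. \<sigma> x < N"
  shows "psd N' (mat N' N' (\<lambda>(x,y). A $$ (\<sigma> x, \<sigma> y)))"
proof -
  have Ad: "A \<in> carrier_mat N N" using A by (simp add: psd_def)
  have main: "scalar_prod (conjugate v) (mat N' N' (\<lambda>(x,y). A $$ (\<sigma> x, \<sigma> y)) *\<^sub>v v) \<in> \<real> \<and>
      0 \<le> Re (scalar_prod (conjugate v) (mat N' N' (\<lambda>(x,y). A $$ (\<sigma> x, \<sigma> y)) *\<^sub>v v))"
    if v: "v \<in> carrier_vec N'" for v
  proof -
    define w where "w = vec N (\<lambda>u. \<Sum>x\<in>{x. x<N' \<and> \<sigma> x = u}. v $ x)"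
    have w: "w \<in> carrier_vec N" by (simp add: w_def)
    have inner: "(A *\<^sub>v w) $ u = (\<Sum>y<N'. A $$ (u, \<sigma> y) * v $ y)" if u: "u < N" for u
    proof -
      have "(A *\<^sub>v w) $ u = (\<Sum>u'<N. A $$ (u,u') * w $ u')"
        using Ad u w by (simp add: scalar_prod_def lessThan_atLeast0)
      also have "\<dots> = (\<Sum>u'<N. (\<Sum>y\<in>{y. y<N' \<and> \<sigma> y = u'}. v $ y) * A $$ (u,u'))"
        by (simp add: w_def mult.commute)
      also have "\<dots> = (\<Sum>y<N'. v $ y * A $$ (u, \<sigma> y))" by (rule sum_fiber[OF \<sigma>])
      finally show ?thesis by (simp add: mult.commute)
    qed
    have "scalar_prod (conjugate w) (A *\<^sub>v w) = (\<Sum>u<N. conjugate (w $ u) * (A *\<^sub>v w) $ u)"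
      using Ad w by (simp add: scalar_prod_def lessThan_atLeast0)
    also have "\<dots> = (\<Sum>u<N. (\<Sum>x\<in>{x. x<N' \<and> \<sigma> x = u}. conjugate (v $ x)) * (\<Sum>y<N'. A $$ (u, \<sigma> y) * v $ y))"
      apply (intro sum.cong refl)
      apply (subst inner, simp)
      apply (simp add: w_def sum_conjugate)
      done
    also have "\<dots> = (\<Sum>x<N'. conjugate (v $ x) * (\<Sum>y<N'. A $$ (\<sigma> x, \<sigma> y) * v $ y))"
      by (rule sum_fiber[OF \<sigma>])
    also have "\<dots> = scalar_prod (conjugate v) (mat N' N' (\<lambda>(x,y). A $$ (\<sigma> x, \<sigma> y)) *\<^sub>v v)"
      using v \<sigma> by (simp add: scalar_prod_def lessThan_atLeast0)
    finally have eq: "scalar_prod (conjugate v) (mat N' N' (\<lambda>(x,y). A $$ (\<sigma> x, \<sigma> y)) *\<^sub>v v) = scalar_prod (conjugate w) (A *\<^sub>v w)" by simp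
    show ?thesis using A w unfolding eq psd_def by blast
  qed
  show ?thesis unfolding psd_def using main by simp
qed

lemma sum_split: "(\<Sum>x<a*b. f x) = (\<Sum>p<a. \<Sum>r<(b::nat). (f (p*b+r)::'a::comm_monoid_add))"
proof -
  have k: "\<And>k. sum f {k..<k + b} = (\<Sum>i=0..<b. f (k+i))"
    using sum.shift_bounds_nat_ivl[of f 0 _ b] by (simp add: add.commute)
  have "\<And>p. sum f {p*b..<p*b+b} = (\<Sum>r<b. f(p*b+r))"
    using k by (simp add: lessThan_atLeast0)
  then show ?thesis using sum.nat_group[of f b a, symmetric] by simp
qed

lemma idx_decomp:
  assumes "x < m1 * (m2::nat)"
  shows "x div m2 < m1" "x mod m2 < m2" "x = (x div m2) * m2 + x mod m2"
proof -
  have "m2 > 0" using assms by (cases m2) auto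
  then show "x div m2 < m1" "x mod m2 < m2" "x = (x div m2) * m2 + x mod m2"
    using assms by (auto simp: less_mult_imp_div_less mult.commute)
qed

lemma idx_eq: "k < (n2::nat) \<Longrightarrow> l < n2 \<Longrightarrow> (i*n2+k = j*n2+l) \<longleftrightarrow> (i = j \<and> k = l)"
  by (metis add_mult_distrib2 div_mult_self3 mod_mult_self3 mod_less div_less add_0_left add.commute mult.commute not_less_zero)

lemma lin_comp: "lin_map n m \<Phi> \<Longrightarrow> lin_map l n \<Theta> \<Longrightarrow> lin_map l m (\<Phi> \<circ> \<Theta>)"
  unfolding lin_map_def by auto

lemma lin_tensor:
  assumes l1: "lin_map n1 m1 \<Phi>" and l2: "lin_map n2 m2 \<Theta>"
  shows "lin_map (n1*n2) (m1*m2) (map_tensor n1 n2 m1 m2 \<Phi> \<Theta>)"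
  unfolding lin_map_def
proof (intro conjI ballI allI)
  fix A :: "complex mat" assume "A \<in> carrier_mat (n1*n2) (n1*n2)"
  show "map_tensor n1 n2 m1 m2 \<Phi> \<Theta> A \<in> carrier_mat (m1 * m2) (m1 * m2)"
    by (simp add: map_tensor_def)
next
  fix A B :: "complex mat" assume A: "A \<in> carrier_mat (n1*n2) (n1*n2)" and B: "B \<in> carrier_mat (n1*n2) (n1*n2)"
  show "map_tensor n1 n2 m1 m2 \<Phi> \<Theta> (A + B) = map_tensor n1 n2 m1 m2 \<Phi> \<Theta> A + map_tensor n1 n2 m1 m2 \<Phi> \<Theta> B"
    using A B by (intro eq_matI) (simp_all add: map_tensor_def idx_less distrib_right sum.distrib)
next
  fix A :: "complex mat" and c :: complex assume A: "A \<in> carrier_mat (n1*n2) (n1*n2)"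
  show "map_tensor n1 n2 m1 m2 \<Phi> \<Theta> (c \<cdot>\<^sub>m A) = c \<cdot>\<^sub>m map_tensor n1 n2 m1 m2 \<Phi> \<Theta> A"
    using A by (intro eq_matI) (simp_all add: map_tensor_def idx_less sum_distrib_left mult.assoc)
qed

lemma mtrace_munit:
  assumes "i<n" "j<n" shows "mtrace (munit n i j) = (if i=j then 1 else 0)"
proof (cases "i = j")
  case True
  then show ?thesis using assms by (simp add: mtrace_def munit_def sum.delta)
next
  case False
  then show ?thesis using assms by (simp add: mtrace_def munit_def, intro sum.neutral) auto
qed

lemma tp_tensor:
  assumes l1: "lin_map n1 m1 \<Phi>" and l2: "lin_map n2 m2 \<Theta>" and t1: "trace_preserving n1 \<Phi>" and t2: "trace_preserving n2 \<Theta>"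
  shows "trace_preserving (n1*n2) (map_tensor n1 n2 m1 m2 \<Phi> \<Theta>)"
  unfolding trace_preserving_def
proof
  fix X :: "complex mat" assume X: "X \<in> carrier_mat (n1*n2) (n1*n2)"
  let ?P = "\<lambda>i j. \<Phi> (munit n1 i j)" and ?T = "\<lambda>k l. \<Theta> (munit n2 k l)"
  have trP: "(\<Sum>p<m1. ?P i j $$ (p,p)) = (if i = j then 1 else 0)" if "i<n1" "j<n1" for i j
  proof -
    have "mtrace (?P i j) = mtrace (munit n1 i j)" using t1 unfolding trace_preserving_def by simp
    then show ?thesis using mtrace_munit[OF that] lin_carrier[OF l1 munit_carrier, of i j]
      unfolding mtrace_def by auto
  qed
  have trT: "(\<Sum>r<m2. ?T k l $$ (r,r)) = (if k = l then 1 else 0)" if "k<n2" "l<n2" for k l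
  proof -
    have "mtrace (?T k l) = mtrace (munit n2 k l)" using t2 unfolding trace_preserving_def by simp
    then show ?thesis using mtrace_munit[OF that] lin_carrier[OF l2 munit_carrier, of k l]
      unfolding mtrace_def by auto
  qed
  have "mtrace (map_tensor n1 n2 m1 m2 \<Phi> \<Theta> X) = (\<Sum>x<m1*m2. map_tensor n1 n2 m1 m2 \<Phi> \<Theta> X $$ (x,x))"
    by (simp add: mtrace_def map_tensor_def)
  also have "\<dots> = (\<Sum>p<m1. \<Sum>r<m2. map_tensor n1 n2 m1 m2 \<Phi> \<Theta> X $$ (p*m2+r, p*m2+r))"
    by (rule sum_split)
  also have "\<dots> = (\<Sum>p<m1. \<Sum>r<m2. \<Sum>i<n1. \<Sum>j<n1. \<Sum>k<n2. \<Sum>l<n2. X $$ (i*n2+k, j*n2+l) * (?P i j $$ (p,p) * ?T k l $$ (r,r)))"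
    by (intro sum.cong refl) (simp add: map_tensor_index[OF l1 l2])
  also have "\<dots> = (\<Sum>i<n1. \<Sum>j<n1. \<Sum>k<n2. \<Sum>l<n2. \<Sum>p<m1. \<Sum>r<m2. X $$ (i*n2+k, j*n2+l) * (?P i j $$ (p,p) * ?T k l $$ (r,r)))"
    apply (simp only: sum.swap[of _ "{..<m2}"])
    apply (simp only: sum.swap[of _ "{..<m1}"])
    done
  also have "\<dots> = (\<Sum>i<n1. \<Sum>j<n1. \<Sum>k<n2. \<Sum>l<n2. X $$ (i*n2+k, j*n2+l) * ((\<Sum>p<m1. ?P i j $$ (p,p)) * (\<Sum>r<m2. ?T k l $$ (r,r))))"
  proof -
    have e: "\<And>c (f::nat\<Rightarrow>complex) g. (\<Sum>p<m1. \<Sum>r<m2. c * (f p * g r)) = c * ((\<Sum>p<m1. f p) * (\<Sum>r<m2. g r))"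
      unfolding sum_product by (simp only: sum_distrib_left)
    show ?thesis by (intro sum.cong refl) (rule e)
  qed
  also have "\<dots> = (\<Sum>i<n1. \<Sum>j<n1. \<Sum>k<n2. \<Sum>l<n2. X $$ (i*n2+k, j*n2+l) * ((if i=j then 1 else 0) * (if k=l then 1 else 0)))"
    by (intro sum.cong refl) (simp add: trP trT)
  also have "\<dots> = (\<Sum>i<n1. \<Sum>k<n2. X $$ (i*n2+k, i*n2+k))"
  proof (rule sum.cong[OF refl])
    fix i assume i: "i \<in> {..<n1}"
    have t: "\<And>j k l. X $$ (i*n2+k, j*n2+l) * ((if i=j then 1 else 0) * (if k=l then 1 else 0)) = (if l = k then (if j = i then X $$ (i*n2+k, i*n2+k) else 0) else 0)"
      by auto
    have "(\<Sum>j<n1. \<Sum>k<n2. \<Sum>l<n2. X $$ (i*n2+k, j*n2+l) * ((if i=j then 1 else 0) * (if k=l then 1 else 0)))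
        = (\<Sum>j<n1. \<Sum>k<n2. (if j = i then X $$ (i*n2+k, i*n2+k) else 0))"
      by (intro sum.cong refl) (simp only: t, simp add: sum.delta)
    also have "\<dots> = (\<Sum>j<n1. if j = i then (\<Sum>k<n2. X $$ (i*n2+k, i*n2+k)) else 0)"
      by (intro sum.cong refl) simp
    also have "\<dots> = (\<Sum>k<n2. X $$ (i*n2+k, i*n2+k))" using i by (simp add: sum.delta)
    finally show "(\<Sum>j<n1. \<Sum>k<n2. \<Sum>l<n2. X $$ (i*n2+k, j*n2+l) * ((if i=j then 1 else 0) * (if k=l then 1 else 0))) = (\<Sum>k<n2. X $$ (i*n2+k, i*n2+k))" .
  qed
  also have "\<dots> = (\<Sum>x<n1*n2. X $$ (x,x))" by (rule sum_split[symmetric])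
  also have "\<dots> = mtrace X" using X by (simp add: mtrace_def)
  finally show "mtrace (map_tensor n1 n2 m1 m2 \<Phi> \<Theta> X) = mtrace X" .
qed


lemma dephase_index[simp]: "p < n \<Longrightarrow> q < n \<Longrightarrow> dephase n A $$ (p,q) = (if p = q then A $$ (p,q) else 0)"
  by (simp add: dephase_def)
lemma dephase_carrier[simp]: "dephase n A \<in> carrier_mat n n"
  by (simp add: dephase_def)
lemma dephase_dims[simp]: "dim_row (dephase n A) = n" "dim_col (dephase n A) = n"
  by (simp_all add: dephase_def)

definition diagP :: "nat \<Rightarrow> nat \<Rightarrow> (complex mat \<Rightarrow> complex mat) \<Rightarrow> bool" where
  "diagP n m \<Phi> \<longleftrightarrow> (\<forall>i<n. \<forall>j<n. i \<noteq> j \<longrightarrow> (\<forall>p<m. \<Phi> (munit n i j) $$ (p,p) = 0))"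
definition offP :: "nat \<Rightarrow> nat \<Rightarrow> (complex mat \<Rightarrow> complex mat) \<Rightarrow> bool" where
  "offP n m \<Phi> \<longleftrightarrow> (\<forall>i<n. \<forall>p<m. \<forall>q<m. p \<noteq> q \<longrightarrow> \<Phi> (munit n i i) $$ (p,q) = 0)"

lemma dephase_munit_off: "i \<noteq> j \<Longrightarrow> dephase n (munit n i j) = 0\<^sub>m n n"
  by (intro eq_matI) (auto simp: munit_def)
lemma dephase_munit_diag: "dephase n (munit n i i) = munit n i i"
  by (intro eq_matI) (auto simp: munit_def)

lemma qo_lin: "quantum_operation n m \<Phi> \<Longrightarrow> lin_map n m \<Phi>"
  by (simp add: quantum_operation_def)

lemma DI_diagP: assumes "detection_incoherent n m \<Phi>" shows "diagP n m \<Phi>"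
  unfolding diagP_def
proof (intro allI impI)
  fix i j p assume i: "i < n" and j: "j < n" and ij: "i \<noteq> j" and p: "p < m"
  have l: "lin_map n m \<Phi>" using assms by (simp add: detection_incoherent_def qo_lin)
  have "dephase m (\<Phi> (munit n i j)) = dephase m (\<Phi> (dephase n (munit n i j)))"
    using assms munit_carrier unfolding detection_incoherent_def by blast
  also have "\<dots> = dephase m (0\<^sub>m m m)" using ij lin_zero[OF l] by (simp add: dephase_munit_off)
  finally have "dephase m (\<Phi> (munit n i j)) $$ (p,p) = 0" using p by simp
  then show "\<Phi> (munit n i j) $$ (p,p) = 0" using p by simp
qed

lemma CI_offP: assumes "creation_incoherent n m \<Phi>" shows "offP n m \<Phi>"
  unfolding offP_def
proof (intro allI impI)
  fix i p q assume i: "i < n" and p: "p < m" and q: "q < m" and pq: "p \<noteq> q"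
  have "\<Phi> (dephase n (munit n i i)) = dephase m (\<Phi> (dephase n (munit n i i)))"
    using assms munit_carrier unfolding creation_incoherent_def by blast
  then have "\<Phi> (munit n i i) = dephase m (\<Phi> (munit n i i))" by (simp add: dephase_munit_diag)
  then have "\<Phi> (munit n i i) $$ (p,q) = dephase m (\<Phi> (munit n i i)) $$ (p,q)" by simp
  then show "\<Phi> (munit n i i) $$ (p,q) = 0" using p q pq by simp
qed

lemma DCI_diagP: assumes "detection_creation_incoherent n m \<Phi>" shows "diagP n m \<Phi>"
  unfolding diagP_def
proof (intro allI impI)
  fix i j p assume i: "i < n" and j: "j < n" and ij: "i \<noteq> j" and p: "p < m"
  have l: "lin_map n m \<Phi>" using assms by (simp add: detection_creation_incoherent_def qo_lin)
  have "dephase m (\<Phi> (munit n i j)) = \<Phi> (dephase n (munit n i j))"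
    using assms munit_carrier unfolding detection_creation_incoherent_def by blast
  also have "\<dots> = 0\<^sub>m m m" using ij lin_zero[OF l] by (simp add: dephase_munit_off)
  finally have "dephase m (\<Phi> (munit n i j)) $$ (p,p) = 0" using p by simp
  then show "\<Phi> (munit n i j) $$ (p,p) = 0" using p by simp
qed

lemma DCI_offP: assumes "detection_creation_incoherent n m \<Phi>" shows "offP n m \<Phi>"
  unfolding offP_def
proof (intro allI impI)
  fix i p q assume i: "i < n" and p: "p < m" and q: "q < m" and pq: "p \<noteq> q"
  have "dephase m (\<Phi> (munit n i i)) = \<Phi> (dephase n (munit n i i))"
    using assms munit_carrier unfolding detection_creation_incoherent_def by blast
  then have "\<Phi> (munit n i i) = dephase m (\<Phi> (munit n i i))" by (simp add: dephase_munit_diag)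
  then have "\<Phi> (munit n i i) $$ (p,q) = dephase m (\<Phi> (munit n i i)) $$ (p,q)" by simp
  then show "\<Phi> (munit n i i) $$ (p,q) = 0" using p q pq by simp
qed

lemma tensor_diag:
  assumes l1: "lin_map n1 m1 \<Phi>" and l2: "lin_map n2 m2 \<Theta>" and d1: "diagP n1 m1 \<Phi>" and d2: "diagP n2 m2 \<Theta>"
    and x: "x < m1*m2"
  shows "map_tensor n1 n2 m1 m2 \<Phi> \<Theta> X $$ (x,x) = map_tensor n1 n2 m1 m2 \<Phi> \<Theta> (dephase (n1*n2) X) $$ (x,x)"
proof -
  define p r where "p = x div m2" and "r = x mod m2"
  have pr: "p < m1" "r < m2" "x = p*m2+r" using idx_decomp[OF x] by (simp_all add: p_def r_def)
  have trm: "X $$ (i*n2+k, j*n2+l) * (\<Phi> (munit n1 i j) $$ (p,p) * \<Theta> (munit n2 k l) $$ (r,r))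
     = dephase (n1*n2) X $$ (i*n2+k, j*n2+l) * (\<Phi> (munit n1 i j) $$ (p,p) * \<Theta> (munit n2 k l) $$ (r,r))"
    if i: "i<n1" and j: "j<n1" and k: "k<n2" and l: "l<n2" for i j k l
  proof (cases "i = j \<and> k = l")
    case True then show ?thesis using i k idx_less[OF i k] by simp
  next
    case False
    then have "\<Phi> (munit n1 i j) $$ (p,p) = 0 \<or> \<Theta> (munit n2 k l) $$ (r,r) = 0"
      using d1 d2 i j k l pr unfolding diagP_def by blast
    then show ?thesis by auto
  qed
  show ?thesis unfolding pr(3) map_tensor_index[OF l1 l2 pr(1) pr(1) pr(2) pr(2)]
    by (intro sum.cong refl) (simp add: trm)
qed

lemma tensor_off:
  assumes l1: "lin_map n1 m1 \<Phi>" and l2: "lin_map n2 m2 \<Theta>" and d1: "offP n1 m1 \<Phi>" and d2: "offP n2 m2 \<Theta>"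
    and x: "x < m1*m2" and y: "y < m1*m2" and xy: "x \<noteq> y"
  shows "map_tensor n1 n2 m1 m2 \<Phi> \<Theta> (dephase (n1*n2) X) $$ (x,y) = 0"
proof -
  define p r where "p = x div m2" and "r = x mod m2"
  have pr: "p < m1" "r < m2" "x = p*m2+r" using idx_decomp[OF x] by (simp_all add: p_def r_def)
  define q s where "q = y div m2" and "s = y mod m2"
  have qs: "q < m1" "s < m2" "y = q*m2+s" using idx_decomp[OF y] by (simp_all add: q_def s_def)
  have trm: "dephase (n1*n2) X $$ (i*n2+k, j*n2+l) * (\<Phi> (munit n1 i j) $$ (p,q) * \<Theta> (munit n2 k l) $$ (r,s)) = 0"
    if i: "i<n1" and j: "j<n1" and k: "k<n2" and l: "l<n2" for i j k l
  proof (cases "i = j \<and> k = l")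
    case True
    have "p \<noteq> q \<or> r \<noteq> s" using xy pr qs by auto
    then have "\<Phi> (munit n1 i j) $$ (p,q) = 0 \<or> \<Theta> (munit n2 k l) $$ (r,s) = 0"
      using d1 d2 i j k l pr qs True unfolding offP_def by blast
    then show ?thesis by auto
  next
    case False
    then show ?thesis using idx_less[OF i k] idx_less[OF j l] idx_eq[OF k l, of i j] by auto
  qed
  show ?thesis unfolding pr(3) qs(3) map_tensor_index[OF l1 l2 pr(1) qs(1) pr(2) qs(2)]
    by (intro sum.neutral ballI) (simp add: trm)
qed

lemma idtensor_carrier[simp]: "map_tensor k n k m (\<lambda>X. X) \<Phi> X \<in> carrier_mat (k*m) (k*m)"
  by (simp add: map_tensor_def)

lemma idtensor_comp:
  assumes l1: "lin_map n m \<Phi>" and l2: "lin_map l n \<Theta>"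
  shows "map_tensor k l k m (\<lambda>X. X) (\<Phi> \<circ> \<Theta>) X = map_tensor k n k m (\<lambda>X. X) \<Phi> (map_tensor k l k n (\<lambda>X. X) \<Theta> X)"
proof (rule eq_matI)
  fix x y assume x': "x < dim_row (map_tensor k n k m (\<lambda>X. X) \<Phi> (map_tensor k l k n (\<lambda>X. X) \<Theta> X))"
    and y': "y < dim_col (map_tensor k n k m (\<lambda>X. X) \<Phi> (map_tensor k l k n (\<lambda>X. X) \<Theta> X))"
  have x: "x < k*m" and y: "y < k*m" using x' y' by (simp_all add: map_tensor_def)
  define i p where "i = x div m" and "p = x mod m"
  have ip: "i < k" "p < m" "x = i*m+p" using idx_decomp[OF x] by (simp_all add: i_def p_def)
  define j q where "j = y div m" and "q = y mod m"
  have jq: "j < k" "q < m" "y = j*m+q" using idx_decomp[OF y] by (simp_all add: j_def q_def)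
  have blkeq: "blk n (map_tensor k l k n (\<lambda>X. X) \<Theta> X) i j = \<Theta> (blk l X i j)"
  proof (rule eq_matI)
    fix a b assume a: "a < dim_row (\<Theta> (blk l X i j))" and b: "b < dim_col (\<Theta> (blk l X i j))"
    have "\<Theta> (blk l X i j) \<in> carrier_mat n n" by (rule lin_carrier[OF l2 blk_carrier])
    then have a: "a < n" and b: "b < n" using a b by auto
    show "blk n (map_tensor k l k n (\<lambda>X. X) \<Theta> X) i j $$ (a, b) = \<Theta> (blk l X i j) $$ (a, b)"
      using idtensor_index[OF l2 ip(1) jq(1) a b] a b by simp
  qed (use lin_carrier[OF l2 blk_carrier, of X i j] in \<open>auto simp: blk_def\<close>)
  show "map_tensor k l k m (\<lambda>X. X) (\<Phi> \<circ> \<Theta>) X $$ (x, y) = map_tensor k n k m (\<lambda>X. X) \<Phi> (map_tensor k l k n (\<lambda>X. X) \<Theta> X) $$ (x, y)"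
  proof -
    have "map_tensor k l k m (\<lambda>X. X) (\<Phi> \<circ> \<Theta>) X $$ (i*m+p, j*m+q) = (\<Phi> \<circ> \<Theta>) (blk l X i j) $$ (p,q)"
      by (rule idtensor_index[OF lin_comp[OF l1 l2] ip(1) jq(1) ip(2) jq(2)])
    also have "\<dots> = \<Phi> (blk n (map_tensor k l k n (\<lambda>X. X) \<Theta> X) i j) $$ (p,q)"
      by (simp only: blkeq comp_def)
    also have "\<dots> = map_tensor k n k m (\<lambda>X. X) \<Phi> (map_tensor k l k n (\<lambda>X. X) \<Theta> X) $$ (i*m+p, j*m+q)"
      by (rule idtensor_index[OF l1 ip(1) jq(1) ip(2) jq(2), symmetric])
    finally show ?thesis unfolding ip(3) jq(3) .
  qed
next
  show "dim_row (map_tensor k l k m (\<lambda>X. X) (\<Phi> \<circ> \<Theta>) X) = dim_row (map_tensor k n k m (\<lambda>X. X) \<Phi> (map_tensor k l k n (\<lambda>X. X) \<Theta> X))"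
    using idtensor_carrier by (metis carrier_matD(1))
next
  show "dim_col (map_tensor k l k m (\<lambda>X. X) (\<Phi> \<circ> \<Theta>) X) = dim_col (map_tensor k n k m (\<lambda>X. X) \<Phi> (map_tensor k l k n (\<lambda>X. X) \<Theta> X))"
    using idtensor_carrier by (metis carrier_matD(2))
qed

lemma cp_comp:
  assumes l1: "lin_map n m \<Phi>" and l2: "lin_map l n \<Theta>"
    and c1: "completely_positive n m \<Phi>" and c2: "completely_positive l n \<Theta>"
  shows "completely_positive l m (\<Phi> \<circ> \<Theta>)"
  using c1 c2 unfolding completely_positive_def idtensor_comp[OF l1 l2] by blast

lemma idx_less3: "i < (k::nat) \<Longrightarrow> a < n \<Longrightarrow> r < m \<Longrightarrow> (i*n+a)*m+r < k*n*m"
  by (intro idx_less) auto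

lemma sig1_val:
  assumes "a < (n1::nat)" "r < m2"
  shows "((((i*m2+r)*n1+a) div n1 div m2) * n1 + ((i*m2+r)*n1+a) mod n1) * m2 + (((i*m2+r)*n1+a) div n1) mod m2
      = (i*n1+a)*m2+r"
  using assms by simp

lemma sig2_val:
  assumes "p < (m1::nat)" "r < m2"
  shows "(((i*(m1*m2)+(p*m2+r)) div (m1*m2)) * m2 + (i*(m1*m2)+(p*m2+r)) mod m2) * m1 + ((i*(m1*m2)+(p*m2+r)) div m2) mod m1
      = (i*m2+r)*m1+p"
proof -
  have e: "i*(m1*m2)+(p*m2+r) = (i*m1+p)*m2+r" by (simp add: algebra_simps)
  have d1: "((i*m1+p)*m2+r) div m2 = i*m1+p" "((i*m1+p)*m2+r) mod m2 = r" using assms by simp_all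
  have d2: "((i*m1+p)*m2+r) div (m1*m2) = i"
    using d1(1) assms by (simp add: div_mult2_eq mult.commute[of m1 m2])
  show ?thesis unfolding e d1 d2 using assms by simp
qed

lemma cp_tensor:
  assumes l1: "lin_map n1 m1 \<Phi>" and l2: "lin_map n2 m2 \<Theta>"
    and c1: "completely_positive n1 m1 \<Phi>" and c2: "completely_positive n2 m2 \<Theta>"
  shows "completely_positive (n1*n2) (m1*m2) (map_tensor n1 n2 m1 m2 \<Phi> \<Theta>)"
  unfolding completely_positive_def
proof (intro allI impI)
  fix k X assume X: "psd (k*(n1*n2)) X"
  let ?\<Psi> = "map_tensor n1 n2 m1 m2 \<Phi> \<Theta>"
  define Y where "Y = map_tensor (k*n1) n2 (k*n1) m2 (\<lambda>X. X) \<Theta> X"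
  have Y: "psd (k*n1*m2) Y" using c2 X unfolding completely_positive_def Y_def by (metis mult.assoc)
  define \<sigma>1 where "\<sigma>1 x = ((x div n1 div m2) * n1 + x mod n1) * m2 + (x div n1) mod m2" for x
  define Z where "Z = mat (k*m2*n1) (k*m2*n1) (\<lambda>(x,y). Y $$ (\<sigma>1 x, \<sigma>1 y))"
  have s1: "\<forall>x<k*m2*n1. \<sigma>1 x < k*n1*m2"
  proof (intro allI impI)
    fix x assume x: "x < k*m2*n1"
    define a u where "a = x mod n1" and "u = x div n1"
    have au: "u < k*m2" "a < n1" "x = u*n1+a" using idx_decomp[OF x] by (simp_all add: a_def u_def)
    define i r where "i = u div m2" and "r = u mod m2"
    have ir: "i < k" "r < m2" "u = i*m2+r" using idx_decomp[OF au(1)] by (simp_all add: i_def r_def)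
    have "\<sigma>1 x = (i*n1+a)*m2+r" unfolding \<sigma>1_def au(3) ir(3) by (rule sig1_val[OF au(2) ir(2)])
    then show "\<sigma>1 x < k*n1*m2" using idx_less3[OF ir(1) au(2) ir(2)] by simp
  qed
  have Z: "psd (k*m2*n1) Z" unfolding Z_def by (rule psd_reindex[OF Y s1])
  define W where "W = map_tensor (k*m2) n1 (k*m2) m1 (\<lambda>X. X) \<Phi> Z"
  have W: "psd (k*m2*m1) W" using c1 Z unfolding completely_positive_def W_def by blast
  define \<sigma>2 where "\<sigma>2 x = ((x div (m1*m2)) * m2 + x mod m2) * m1 + (x div m2) mod m1" for x
  have dec: "\<exists>i p r. i < k \<and> p < m1 \<and> r < m2 \<and> x = i*(m1*m2)+(p*m2+r)" if x: "x < k*(m1*m2)" for x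
  proof -
    define i u where "i = x div (m1*m2)" and "u = x mod (m1*m2)"
    have iu: "i < k" "u < m1*m2" "x = i*(m1*m2)+u" using idx_decomp[OF x] by (simp_all add: i_def u_def)
    define p r where "p = u div m2" and "r = u mod m2"
    have pr: "p < m1" "r < m2" "u = p*m2+r" using idx_decomp[OF iu(2)] by (simp_all add: p_def r_def)
    show ?thesis using iu pr by blast
  qed
  have s2: "\<forall>x<k*(m1*m2). \<sigma>2 x < k*m2*m1"
  proof (intro allI impI)
    fix x assume x: "x < k*(m1*m2)"
    then obtain i p r where ipr: "i < k" "p < m1" "r < m2" "x = i*(m1*m2)+(p*m2+r)" using dec by blast
    have "\<sigma>2 x = (i*m2+r)*m1+p" unfolding \<sigma>2_def ipr(4) by (rule sig2_val[OF ipr(2,3)])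
    then show "\<sigma>2 x < k*m2*m1" using idx_less3[OF ipr(1) ipr(3) ipr(2)] by simp
  qed
  have entry: "?\<Psi> (blk (n1*n2) X i j) $$ (p*m2+r, q*m2+s) = W $$ ((i*m2+r)*m1+p, (j*m2+s)*m1+q)"
    if ij: "i < k" "j < k" and pq: "p < m1" "q < m1" and rs: "r < m2" "s < m2" for i j p q r s
  proof -
    have irk: "i*m2+r < k*m2" "j*m2+s < k*m2" using idx_less ij rs by auto
    have "W $$ ((i*m2+r)*m1+p, (j*m2+s)*m1+q) = \<Phi> (blk n1 Z (i*m2+r) (j*m2+s)) $$ (p,q)"
      unfolding W_def by (rule idtensor_index[OF l1 irk pq])
    also have "\<dots> = (\<Sum>a<n1. \<Sum>b<n1. Z $$ ((i*m2+r)*n1+a, (j*m2+s)*n1+b) * \<Phi> (munit n1 a b) $$ (p,q))"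
      using lin_expand[OF l1 blk_carrier pq] by simp
    also have "\<dots> = (\<Sum>a<n1. \<Sum>b<n1. (\<Sum>c<n2. \<Sum>d<n2. X $$ ((i*n1+a)*n2+c, (j*n1+b)*n2+d) * \<Theta> (munit n2 c d) $$ (r,s)) * \<Phi> (munit n1 a b) $$ (p,q))"
    proof (intro sum.cong refl)
      fix a b assume a: "a \<in> {..<n1}" and b: "b \<in> {..<n1}"
      have a': "a < n1" and b': "b < n1" using a b by auto
      have ia: "i*n1+a < k*n1" "j*n1+b < k*n1" using idx_less ij a' b' by auto
      have "Z $$ ((i*m2+r)*n1+a, (j*m2+s)*n1+b) = Y $$ ((i*n1+a)*m2+r, (j*n1+b)*m2+s)"
        unfolding Z_def using idx_less[OF irk(1) a'] idx_less[OF irk(2) b'] sig1_val[OF a' rs(1)] sig1_val[OF b' rs(2)]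
        by (simp add: \<sigma>1_def)
      also have "\<dots> = \<Theta> (blk n2 X (i*n1+a) (j*n1+b)) $$ (r,s)"
        unfolding Y_def by (rule idtensor_index[OF l2 ia rs])
      also have "\<dots> = (\<Sum>c<n2. \<Sum>d<n2. X $$ ((i*n1+a)*n2+c, (j*n1+b)*n2+d) * \<Theta> (munit n2 c d) $$ (r,s))"
        using lin_expand[OF l2 blk_carrier rs] by simp
      finally show "Z $$ ((i*m2+r)*n1+a, (j*m2+s)*n1+b) * \<Phi> (munit n1 a b) $$ (p,q) =
        (\<Sum>c<n2. \<Sum>d<n2. X $$ ((i*n1+a)*n2+c, (j*n1+b)*n2+d) * \<Theta> (munit n2 c d) $$ (r,s)) * \<Phi> (munit n1 a b) $$ (p,q)"
        by simp
    qed
    also have "\<dots> = (\<Sum>a<n1. \<Sum>b<n1. \<Sum>c<n2. \<Sum>d<n2. X $$ (i*(n1*n2)+(a*n2+c), j*(n1*n2)+(b*n2+d)) * (\<Phi> (munit n1 a b) $$ (p,q) * \<Theta> (munit n2 c d) $$ (r,s)))"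
      by (simp add: sum_distrib_right sum_distrib_left algebra_simps)
    also have "\<dots> = ?\<Psi> (blk (n1*n2) X i j) $$ (p*m2+r, q*m2+s)"
      unfolding map_tensor_index[OF l1 l2 pq rs]
      by (intro sum.cong refl) (simp add: idx_less)
    finally show ?thesis by simp
  qed
  have eq: "map_tensor k (n1*n2) k (m1*m2) (\<lambda>X. X) ?\<Psi> X = mat (k*(m1*m2)) (k*(m1*m2)) (\<lambda>(x,y). W $$ (\<sigma>2 x, \<sigma>2 y))"
  proof (rule eq_matI)
    fix x y assume x': "x < dim_row (mat (k*(m1*m2)) (k*(m1*m2)) (\<lambda>(x,y). W $$ (\<sigma>2 x, \<sigma>2 y)))"
      and y': "y < dim_col (mat (k*(m1*m2)) (k*(m1*m2)) (\<lambda>(x,y). W $$ (\<sigma>2 x, \<sigma>2 y)))"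
    have x: "x < k*(m1*m2)" and y: "y < k*(m1*m2)" using x' y' by auto
    obtain i p r where ipr: "i < k" "p < m1" "r < m2" "x = i*(m1*m2)+(p*m2+r)" using dec[OF x] by blast
    obtain j q s where jqs: "j < k" "q < m1" "s < m2" "y = j*(m1*m2)+(q*m2+s)" using dec[OF y] by blast
    have "map_tensor k (n1*n2) k (m1*m2) (\<lambda>X. X) ?\<Psi> X $$ (x,y) = ?\<Psi> (blk (n1*n2) X i j) $$ (p*m2+r, q*m2+s)"
      unfolding ipr(4) jqs(4)
      by (rule idtensor_index[OF lin_tensor[OF l1 l2] ipr(1) jqs(1) idx_less[OF ipr(2,3)] idx_less[OF jqs(2,3)]])
    also have "\<dots> = W $$ ((i*m2+r)*m1+p, (j*m2+s)*m1+q)" by (rule entry[OF ipr(1) jqs(1) ipr(2) jqs(2) ipr(3) jqs(3)])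
    also have "\<dots> = W $$ (\<sigma>2 x, \<sigma>2 y)"
      unfolding \<sigma>2_def ipr(4) jqs(4) sig2_val[OF ipr(2,3)] sig2_val[OF jqs(2,3)] ..
    finally show "map_tensor k (n1*n2) k (m1*m2) (\<lambda>X. X) ?\<Psi> X $$ (x,y) = mat (k*(m1*m2)) (k*(m1*m2)) (\<lambda>(x,y). W $$ (\<sigma>2 x, \<sigma>2 y)) $$ (x,y)"
      using x y by simp
  next
    show "dim_row (map_tensor k (n1*n2) k (m1*m2) (\<lambda>X. X) ?\<Psi> X) = dim_row (mat (k*(m1*m2)) (k*(m1*m2)) (\<lambda>(x,y). W $$ (\<sigma>2 x, \<sigma>2 y)))"
      using idtensor_carrier by (metis carrier_matD(1) dim_row_mat(1))
  next
    show "dim_col (map_tensor k (n1*n2) k (m1*m2) (\<lambda>X. X) ?\<Psi> X) = dim_col (mat (k*(m1*m2)) (k*(m1*m2)) (\<lambda>(x,y). W $$ (\<sigma>2 x, \<sigma>2 y)))"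
      using idtensor_carrier by (metis carrier_matD(2) dim_col_mat(1))
  qed
  show "psd (k*(m1*m2)) (map_tensor k (n1*n2) k (m1*m2) (\<lambda>X. X) ?\<Psi> X)"
    unfolding eq by (rule psd_reindex[OF W s2])
qed

lemma qo_comp:
  assumes q1: "quantum_operation n m \<Phi>" and q2: "quantum_operation l n \<Theta>"
  shows "quantum_operation l m (\<Phi> \<circ> \<Theta>)"
proof -
  have l1: "lin_map n m \<Phi>" and l2: "lin_map l n \<Theta>" using q1 q2 by (simp_all add: quantum_operation_def)
  have "trace_preserving l (\<Phi> \<circ> \<Theta>)"
    using q1 q2 lin_carrier[OF l2] unfolding quantum_operation_def trace_preserving_def by simp
  then show ?thesis using lin_comp[OF l1 l2] cp_comp[OF l1 l2] q1 q2 unfolding quantum_operation_def by blast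
qed

lemma qo_tensor:
  assumes q1: "quantum_operation n1 m1 \<Phi>" and q2: "quantum_operation n2 m2 \<Theta>"
  shows "quantum_operation (n1*n2) (m1*m2) (map_tensor n1 n2 m1 m2 \<Phi> \<Theta>)"
  using q1 q2 lin_tensor cp_tensor tp_tensor unfolding quantum_operation_def by blast

lemma tensor_carrier[simp]: "map_tensor n1 n2 m1 m2 \<Phi> \<Theta> X \<in> carrier_mat (m1*m2) (m1*m2)"
  by (simp add: map_tensor_def)

lemma tensor_DI_eq:
  assumes l1: "lin_map n1 m1 \<Phi>" and l2: "lin_map n2 m2 \<Theta>" and d1: "diagP n1 m1 \<Phi>" and d2: "diagP n2 m2 \<Theta>"
  shows "dephase (m1*m2) (map_tensor n1 n2 m1 m2 \<Phi> \<Theta> X) = dephase (m1*m2) (map_tensor n1 n2 m1 m2 \<Phi> \<Theta> (dephase (n1*n2) X))"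
proof (rule eq_matI)
  fix x y assume "x < dim_row (dephase (m1*m2) (map_tensor n1 n2 m1 m2 \<Phi> \<Theta> (dephase (n1*n2) X)))"
    "y < dim_col (dephase (m1*m2) (map_tensor n1 n2 m1 m2 \<Phi> \<Theta> (dephase (n1*n2) X)))"
  then have x: "x < m1*m2" and y: "y < m1*m2" by simp_all
  show "dephase (m1*m2) (map_tensor n1 n2 m1 m2 \<Phi> \<Theta> X) $$ (x,y) = dephase (m1*m2) (map_tensor n1 n2 m1 m2 \<Phi> \<Theta> (dephase (n1*n2) X)) $$ (x,y)"
  proof (cases "x = y")
    case True
    have "map_tensor n1 n2 m1 m2 \<Phi> \<Theta> X $$ (x,x) = map_tensor n1 n2 m1 m2 \<Phi> \<Theta> (dephase (n1*n2) X) $$ (x,x)"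
      by (rule tensor_diag[OF l1 l2 d1 d2 x])
    then show ?thesis using x y True by (simp only: dephase_index if_True)
  qed (use x y in simp)
qed simp_all

lemma tensor_CI_eq:
  assumes l1: "lin_map n1 m1 \<Phi>" and l2: "lin_map n2 m2 \<Theta>" and d1: "offP n1 m1 \<Phi>" and d2: "offP n2 m2 \<Theta>"
  shows "map_tensor n1 n2 m1 m2 \<Phi> \<Theta> (dephase (n1*n2) X) = dephase (m1*m2) (map_tensor n1 n2 m1 m2 \<Phi> \<Theta> (dephase (n1*n2) X))"
proof (rule eq_matI)
  fix x y assume "x < dim_row (dephase (m1*m2) (map_tensor n1 n2 m1 m2 \<Phi> \<Theta> (dephase (n1*n2) X)))"
    "y < dim_col (dephase (m1*m2) (map_tensor n1 n2 m1 m2 \<Phi> \<Theta> (dephase (n1*n2) X)))"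
  then have x: "x < m1*m2" and y: "y < m1*m2" by simp_all
  show "map_tensor n1 n2 m1 m2 \<Phi> \<Theta> (dephase (n1*n2) X) $$ (x,y) = dephase (m1*m2) (map_tensor n1 n2 m1 m2 \<Phi> \<Theta> (dephase (n1*n2) X)) $$ (x,y)"
    using x y tensor_off[OF l1 l2 d1 d2 x y] by simp
qed (simp_all add: map_tensor_def)

lemma tensor_DCI_eq:
  assumes l1: "lin_map n1 m1 \<Phi>" and l2: "lin_map n2 m2 \<Theta>" and d1: "diagP n1 m1 \<Phi>" and d2: "diagP n2 m2 \<Theta>"
    and o1: "offP n1 m1 \<Phi>" and o2: "offP n2 m2 \<Theta>"
  shows "dephase (m1*m2) (map_tensor n1 n2 m1 m2 \<Phi> \<Theta> X) = map_tensor n1 n2 m1 m2 \<Phi> \<Theta> (dephase (n1*n2) X)"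
  by (rule trans[OF tensor_DI_eq[OF l1 l2 d1 d2, of X] tensor_CI_eq[OF l1 l2 o1 o2, of X, symmetric]])

theorem lemma11:
  fixes K :: free_kind
    and \<Phi> \<Theta> :: "complex mat \<Rightarrow> complex mat"
  shows "(\<forall>l n m. free_op K n m \<Phi> \<and> free_op K l n \<Theta> \<longrightarrow> free_op K l m (\<Phi> \<circ> \<Theta>)) \<and>
         (\<forall>n1 m1 n2 m2. free_op K n1 m1 \<Phi> \<and> free_op K n2 m2 \<Theta> \<longrightarrow>
            free_op K (n1 * n2) (m1 * m2) (map_tensor n1 n2 m1 m2 \<Phi> \<Theta>))"
proof (cases K)
  case DI
  have comp: "detection_incoherent l m (\<Phi> \<circ> \<Theta>)"
    if a1: "detection_incoherent n m \<Phi>" and a2: "detection_incoherent l n \<Theta>" for l n m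
  proof -
    have q1: "quantum_operation n m \<Phi>" and q2: "quantum_operation l n \<Theta>"
      using a1 a2 by (simp_all add: detection_incoherent_def)
    have l2: "lin_map l n \<Theta>" using q2 by (simp add: quantum_operation_def)
    have e1: "\<And>B. B \<in> carrier_mat n n \<Longrightarrow> dephase m (\<Phi> B) = dephase m (\<Phi> (dephase n B))"
      using a1 unfolding detection_incoherent_def by blast
    have e2: "\<And>A. A \<in> carrier_mat l l \<Longrightarrow> dephase n (\<Theta> A) = dephase n (\<Theta> (dephase l A))"
      using a2 unfolding detection_incoherent_def by blast
    have "dephase m (\<Phi> (\<Theta> A)) = dephase m (\<Phi> (\<Theta> (dephase l A)))" if A: "A \<in> carrier_mat l l" for A
    proof -
      have "dephase m (\<Phi> (\<Theta> A)) = dephase m (\<Phi> (dephase n (\<Theta> A)))" by (rule e1[OF lin_carrier[OF l2 A]])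
      also have "\<dots> = dephase m (\<Phi> (dephase n (\<Theta> (dephase l A))))" by (simp only: e2[OF A])
      also have "\<dots> = dephase m (\<Phi> (\<Theta> (dephase l A)))" by (rule e1[OF lin_carrier[OF l2 dephase_carrier], symmetric])
      finally show ?thesis .
    qed
    then show ?thesis using qo_comp[OF q1 q2] unfolding detection_incoherent_def comp_apply by blast
  qed
  have tens: "detection_incoherent (n1*n2) (m1*m2) (map_tensor n1 n2 m1 m2 \<Phi> \<Theta>)"
    if a1: "detection_incoherent n1 m1 \<Phi>" and a2: "detection_incoherent n2 m2 \<Theta>" for n1 m1 n2 m2
  proof -
    have q1: "quantum_operation n1 m1 \<Phi>" and q2: "quantum_operation n2 m2 \<Theta>"
      using a1 a2 by (simp_all add: detection_incoherent_def)
    show ?thesis using qo_tensor[OF q1 q2] tensor_DI_eq[OF qo_lin[OF q1] qo_lin[OF q2] DI_diagP[OF a1] DI_diagP[OF a2]]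
      unfolding detection_incoherent_def by blast
  qed
  show ?thesis using DI comp tens by auto
next
  case CI
  have comp: "creation_incoherent l m (\<Phi> \<circ> \<Theta>)"
    if a1: "creation_incoherent n m \<Phi>" and a2: "creation_incoherent l n \<Theta>" for l n m
  proof -
    have q1: "quantum_operation n m \<Phi>" and q2: "quantum_operation l n \<Theta>"
      using a1 a2 by (simp_all add: creation_incoherent_def)
    have l2: "lin_map l n \<Theta>" using q2 by (simp add: quantum_operation_def)
    have e1: "\<And>B. B \<in> carrier_mat n n \<Longrightarrow> \<Phi> (dephase n B) = dephase m (\<Phi> (dephase n B))"
      using a1 unfolding creation_incoherent_def by blast
    have e2: "\<And>A. A \<in> carrier_mat l l \<Longrightarrow> \<Theta> (dephase l A) = dephase n (\<Theta> (dephase l A))"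
      using a2 unfolding creation_incoherent_def by blast
    have "\<Phi> (\<Theta> (dephase l A)) = dephase m (\<Phi> (\<Theta> (dephase l A)))" if A: "A \<in> carrier_mat l l" for A
    proof -
      have B: "\<Theta> (dephase l A) \<in> carrier_mat n n" by (rule lin_carrier[OF l2 dephase_carrier])
      have "\<Phi> (\<Theta> (dephase l A)) = \<Phi> (dephase n (\<Theta> (dephase l A)))" by (subst e2[OF A, symmetric]) (rule refl)
      also have "\<dots> = dephase m (\<Phi> (dephase n (\<Theta> (dephase l A))))" by (rule e1[OF B])
      also have "\<dots> = dephase m (\<Phi> (\<Theta> (dephase l A)))" by (subst e2[OF A, symmetric]) (rule refl)
      finally show ?thesis .
    qed
    then show ?thesis using qo_comp[OF q1 q2] unfolding creation_incoherent_def comp_apply by blast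
  qed
  have tens: "creation_incoherent (n1*n2) (m1*m2) (map_tensor n1 n2 m1 m2 \<Phi> \<Theta>)"
    if a1: "creation_incoherent n1 m1 \<Phi>" and a2: "creation_incoherent n2 m2 \<Theta>" for n1 m1 n2 m2
  proof -
    have q1: "quantum_operation n1 m1 \<Phi>" and q2: "quantum_operation n2 m2 \<Theta>"
      using a1 a2 by (simp_all add: creation_incoherent_def)
    show ?thesis using qo_tensor[OF q1 q2] tensor_CI_eq[OF qo_lin[OF q1] qo_lin[OF q2] CI_offP[OF a1] CI_offP[OF a2]]
      unfolding creation_incoherent_def by blast
  qed
  show ?thesis using CI comp tens by auto
next
  case DCI
  have comp: "detection_creation_incoherent l m (\<Phi> \<circ> \<Theta>)"
    if a1: "detection_creation_incoherent n m \<Phi>" and a2: "detection_creation_incoherent l n \<Theta>" for l n m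
  proof -
    have q1: "quantum_operation n m \<Phi>" and q2: "quantum_operation l n \<Theta>"
      using a1 a2 by (simp_all add: detection_creation_incoherent_def)
    have l2: "lin_map l n \<Theta>" using q2 by (simp add: quantum_operation_def)
    have e1: "\<And>B. B \<in> carrier_mat n n \<Longrightarrow> dephase m (\<Phi> B) = \<Phi> (dephase n B)"
      using a1 unfolding detection_creation_incoherent_def by blast
    have e2: "\<And>A. A \<in> carrier_mat l l \<Longrightarrow> dephase n (\<Theta> A) = \<Theta> (dephase l A)"
      using a2 unfolding detection_creation_incoherent_def by blast
    have "dephase m (\<Phi> (\<Theta> A)) = \<Phi> (\<Theta> (dephase l A))" if A: "A \<in> carrier_mat l l" for A
      using e1[OF lin_carrier[OF l2 A]] e2[OF A] by simp
    then show ?thesis using qo_comp[OF q1 q2] unfolding detection_creation_incoherent_def comp_apply by blast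
  qed
  have tens: "detection_creation_incoherent (n1*n2) (m1*m2) (map_tensor n1 n2 m1 m2 \<Phi> \<Theta>)"
    if a1: "detection_creation_incoherent n1 m1 \<Phi>" and a2: "detection_creation_incoherent n2 m2 \<Theta>" for n1 m1 n2 m2
  proof -
    have q1: "quantum_operation n1 m1 \<Phi>" and q2: "quantum_operation n2 m2 \<Theta>"
      using a1 a2 by (simp_all add: detection_creation_incoherent_def)
    show ?thesis using qo_tensor[OF q1 q2] tensor_DCI_eq[OF qo_lin[OF q1] qo_lin[OF q2] DCI_diagP[OF a1] DCI_diagP[OF a2] DCI_offP[OF a1] DCI_offP[OF a2]]
      unfolding detection_creation_incoherent_def by blast
  qed
  show ?thesis using DCI comp tens by auto
qed

end
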